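(* For $G_w$-almost every $w\in\Theta_w$, the distribution $K_w$ has a continuous CDF (is atomless). Consequently the set $\Theta':=\{(w,B)\in\Theta: K_w \text{ has a continuous CDF}\}$ satisfies $G(\Theta')=1$.
   Context: Setting. Fix an integer $d\ge 2$ and constants $U>0$, $B_{\min}>0$. Buyer types are $(w,B)\in\Theta:=(0,U)^d\times(B_{\min},U)$; $\Theta_w:=(0,U)^d$. Item types are $\alpha\in A\subset\mathbb{R}^d_{+}$ (strictly positive orthant); all sets carry the Lebesgue $\sigma$-algebra. $F$ is a probability distribution on $A$ with a density and $G$ a probability distribution on $\Theta$ with a density; $G_w$ is the marginal distribution of $w$ under $G$. Reserve prices: measurable $r:A\to(0,\infty)$. Let $K$ be the distribution of $\alpha/r(\alpha)$ when $\alpha\sim F$, and for $w\in\Theta_w$ let $K_w$ be the distribution of $w^T\gamma$ when $\gamma\sim K$ (i.e. the distribution of $w^T\alpha/r(\alpha)$ under $\alpha\sim F$). *)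

theory Defs
  imports "HOL-Probability.Probability"
begin

definition Theta :: "real \<Rightarrow> real \<Rightarrow> ((real^'n) \<times> real) set" where
  "Theta U Bmin = {(w, B). (\<forall>i. 0 < w $ i \<and> w $ i < U) \<and> Bmin < B \<and> B < U}"

definition Kdist :: "(real^'n) measure \<Rightarrow> (real^'n \<Rightarrow> real) \<Rightarrow> (real^'n) measure" where
  "Kdist F r = distr F borel (\<lambda>\<alpha>. (1 / r \<alpha>) *\<^sub>R \<alpha>)"

definition Kw :: "(real^'n) measure \<Rightarrow> (real^'n \<Rightarrow> real) \<Rightarrow> real^'n \<Rightarrow> real measure" where
  "Kw F r w = distr (Kdist F r) borel (\<lambda>\<gamma>. w \<bullet> \<gamma>)"

end

theory Submission
  imports Defs
begin


lemma cdf_cont_of_no_atoms: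
  fixes M :: "real measure"
  assumes "prob_space M" "sets M = sets borel" "\<And>c. measure M {c} = 0"
  shows "continuous_on UNIV (cdf M)"
proof -
  interpret real_distribution M using assms by (auto simp: real_distribution_def real_distribution_axioms_def)
  show ?thesis using isCont_cdf assms(3) by (intro continuous_at_imp_continuous_on) auto
qed

lemma no_atoms_of_pair:
  fixes K :: "(real^'n) measure"
  assumes P: "prob_space K" and S: "sets K = sets borel"
    and Z: "emeasure (K \<Otimes>\<^sub>M K) {p. w \<bullet> fst p = w \<bullet> snd p} = 0"
  shows "measure (distr K borel (\<lambda>\<gamma>. w \<bullet> \<gamma>)) {c} = 0"
proof -
  interpret prob_space K by fact
  have meas: "(\<lambda>\<gamma>. w \<bullet> \<gamma>) \<in> measurable K borel"
    using S by (simp add: measurable_cong_sets[OF S refl])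
  define T where "T = (\<lambda>\<gamma>. w \<bullet> \<gamma>) -` {c} \<inter> space K"
  have T: "T \<in> sets K" unfolding T_def using meas by (intro measurable_sets) auto
  have "emeasure (K \<Otimes>\<^sub>M K) (T \<times> T) \<le> emeasure (K \<Otimes>\<^sub>M K) {p. w \<bullet> fst p = w \<bullet> snd p}"
  proof (rule emeasure_mono)
    show "T \<times> T \<subseteq> {p. w \<bullet> fst p = w \<bullet> snd p}" unfolding T_def by auto
    have "{p \<in> space (K \<Otimes>\<^sub>M K). w \<bullet> fst p = w \<bullet> snd p} \<in> sets (K \<Otimes>\<^sub>M K)"
      using meas by measurable
    moreover have "space (K \<Otimes>\<^sub>M K) = UNIV" using S by (simp add: space_pair_measure sets_eq_imp_space_eq)
    ultimately show "{p. w \<bullet> fst p = w \<bullet> snd p} \<in> sets (K \<Otimes>\<^sub>M K)" by simp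
  qed
  then have "emeasure K T * emeasure K T = 0"
    using Z T by (simp add: emeasure_pair_measure_Times)
  then have "emeasure K T = 0" by simp
  then show ?thesis
    using meas \<open>emeasure K T = 0\<close> by (simp add: emeasure_distr T_def measure_def)
qed


lemma Kdist_props:
  fixes F :: "(real^'n) measure" and f :: "real^'n \<Rightarrow> ennreal" and A :: "(real^'n) set"
  assumes d2: "CARD('n) \<ge> 2"
    and A_meas: "A \<in> sets lebesgue"
    and f_meas: "f \<in> borel_measurable lebesgue"
    and F_def: "F = density lebesgue f"
    and F_prob: "prob_space F"
    and F_on_A: "emeasure F A = 1"
    and r_meas: "r \<in> borel_measurable lebesgue"
    and r_pos: "\<forall>\<alpha>\<in>A. 0 < r \<alpha>"
  shows "prob_space (Kdist F r)" "sets (Kdist F r) = sets borel"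
    "\<And>g0. emeasure (Kdist F r) {g0} = 0"
proof -
  define \<phi> where "\<phi> = (\<lambda>\<alpha>::real^'n. (1 / r \<alpha>) *\<^sub>R \<alpha>)"
  have sF: "sets F = sets lebesgue" using F_def by simp
  have spF: "space F = UNIV" using F_def by simp
  have m: "\<phi> \<in> measurable F borel"
    unfolding measurable_cong_sets[OF sF refl] \<phi>_def using r_meas by (intro borel_measurable_scaleR borel_measurable_divide ) (auto intro: measurable_completion)
  interpret prob_space F by fact
  show "prob_space (Kdist F r)" unfolding Kdist_def \<phi>_def[symmetric] using m by (rule prob_space_distr)
  show "sets (Kdist F r) = sets borel" unfolding Kdist_def by simp
  fix g0 :: "real^'n"
  define L where "L = span {g0}"
  have "dim L \<le> 1" unfolding L_def dim_span
    using dim_le_card[of "{g0}" "{g0}"] by (auto simp: span_base)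
  then have "negligible L" using d2 by (intro negligible_lowdim) auto
  then have Ln: "L \<in> null_sets lebesgue" by (simp add: negligible_iff_null_sets)
  have LF: "L \<in> null_sets F" unfolding F_def
    using Ln f_meas by (subst null_sets_density_iff) (auto intro: AE_I')
  have AF: "emeasure F (UNIV - A) = 0"
  proof -
    have "A \<in> sets F" using A_meas sF by simp
    then show ?thesis using emeasure_compl[of A F] F_on_A spF emeasure_space_1 by simp
  qed
  have sub: "\<phi> -` {g0} \<inter> space F \<subseteq> (UNIV - A) \<union> L"
  proof
    fix \<alpha> assume "\<alpha> \<in> \<phi> -` {g0} \<inter> space F"
    then have e: "(1 / r \<alpha>) *\<^sub>R \<alpha> = g0" by (simp add: \<phi>_def)
    show "\<alpha> \<in> (UNIV - A) \<union> L"
    proof (cases "\<alpha> \<in> A")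
      case True
      then have "r \<alpha> > 0" using r_pos by auto
      then have "\<alpha> = r \<alpha> *\<^sub>R g0" using e by auto
      then show ?thesis unfolding L_def by (metis UnI2 span_base span_scale singletonI)
    qed auto
  qed
  have cA: "UNIV - A \<in> sets F" using A_meas sF spF sets.compl_sets[of A F] by simp
  have "emeasure F (\<phi> -` {g0} \<inter> space F) \<le> emeasure F ((UNIV - A) \<union> L)"
    using sub cA LF by (intro emeasure_mono) auto
  also have "\<dots> \<le> emeasure F (UNIV - A) + emeasure F L"
    using cA LF by (intro emeasure_subadditive) auto
  also have "\<dots> = 0" using AF LF by auto
  finally show "emeasure (Kdist F r) {g0} = 0"
    unfolding Kdist_def \<phi>_def[symmetric] using m by (simp add: emeasure_distr)
qed


lemma AE_hyper:
  fixes K :: "(real^'n) measure"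
  assumes P: "prob_space K" and S: "sets K = sets borel" and At: "\<And>g. emeasure K {g} = 0"
  shows "AE w in lborel. emeasure (K \<Otimes>\<^sub>M K) {p. w \<bullet> fst p = w \<bullet> snd p} = 0"
proof -
  define KK where "KK = K \<Otimes>\<^sub>M K"
  interpret K: prob_space K by fact
  interpret KK: prob_space KK unfolding KK_def by (intro prob_space_pair P)
  interpret pair_sigma_finite lborel KK
    by (intro pair_sigma_finite.intro lborel.sigma_finite_measure_axioms KK.sigma_finite_measure_axioms)
  have spK: "space K = UNIV" using S sets_eq_imp_space_eq by fastforce
  have sKK: "sets KK = sets (borel \<Otimes>\<^sub>M borel)" unfolding KK_def
    by (intro sets_pair_measure_cong S)
  have spKK: "space KK = UNIV" using sKK sets_eq_imp_space_eq by (fastforce simp: space_pair_measure)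
  define Dg where "Dg = {p::(real^'n)\<times>(real^'n). fst p = snd p}"
  have Dg: "Dg \<in> sets KK"
  proof -
    have "{p \<in> space (borel \<Otimes>\<^sub>M borel). fst p = (snd p :: real^'n)} \<in> sets (borel \<Otimes>\<^sub>M borel)"
      by measurable
    then show ?thesis using sKK by (simp add: Dg_def space_pair_measure)
  qed
  have KDg: "emeasure KK Dg = 0"
  proof -
    have "emeasure KK Dg = (\<integral>\<^sup>+x. emeasure K (Pair x -` Dg) \<partial>K)"
      unfolding KK_def using Dg KK_def by (intro K.emeasure_pair_measure_alt) auto
    also have "\<dots> = (\<integral>\<^sup>+x. 0 \<partial>K)"
    proof (intro nn_integral_cong)
      fix x have "Pair x -` Dg = {x}" by (auto simp: Dg_def)
      then show "emeasure K (Pair x -` Dg) = 0" using At by simp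
    qed
    finally show ?thesis by simp
  qed
  define E where "E = {x::(real^'n) \<times> ((real^'n)\<times>(real^'n)). fst x \<bullet> fst (snd x) = fst x \<bullet> snd (snd x)}"
  have E: "E \<in> sets (lborel \<Otimes>\<^sub>M KK)"
  proof -
    have "{x \<in> space (borel \<Otimes>\<^sub>M (borel \<Otimes>\<^sub>M borel)). fst x \<bullet> fst (snd x) = fst x \<bullet> (snd (snd x) :: real^'n)}
        \<in> sets (borel \<Otimes>\<^sub>M (borel \<Otimes>\<^sub>M borel))"
      by measurable
    moreover have "sets (lborel \<Otimes>\<^sub>M KK) = sets (borel \<Otimes>\<^sub>M (borel \<Otimes>\<^sub>M borel))"
      by (intro sets_pair_measure_cong sKK) simp
    moreover have "{x \<in> space (borel \<Otimes>\<^sub>M (borel \<Otimes>\<^sub>M borel)). fst x \<bullet> fst (snd x) = fst x \<bullet> (snd (snd x) :: real^'n)} = E"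
      by (simp add: E_def space_pair_measure)
    ultimately show ?thesis by metis
  qed
  have "emeasure (lborel \<Otimes>\<^sub>M KK) E = (\<integral>\<^sup>+p. emeasure lborel ((\<lambda>w. (w, p)) -` E) \<partial>KK)"
    using E by (rule emeasure_pair_measure_alt2)
  also have "\<dots> \<le> (\<integral>\<^sup>+p. \<infinity> * indicator Dg p \<partial>KK)"
  proof (intro nn_integral_mono)
    fix p :: "(real^'n)\<times>(real^'n)"
    show "emeasure lborel ((\<lambda>w. (w, p)) -` E) \<le> \<infinity> * indicator Dg p"
    proof (cases "p \<in> Dg")
      case False
      then have ne: "fst p - snd p \<noteq> 0" by (auto simp: Dg_def)
      have eq: "(\<lambda>w. (w, p)) -` E = {w. (fst p - snd p) \<bullet> w = 0}"
        by (auto simp: E_def inner_diff_left inner_diff_right inner_commute)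
      have "negligible {w. (fst p - snd p) \<bullet> w = 0}" using ne by (intro negligible_hyperplane) auto
      then have "{w. (fst p - snd p) \<bullet> w = 0} \<in> null_sets lebesgue" by (simp add: negligible_iff_null_sets)
      moreover have "{w. (fst p - snd p) \<bullet> w = 0} \<in> sets lborel"
        using closed_hyperplane by (auto intro: borel_closed)
      ultimately have "{w. (fst p - snd p) \<bullet> w = 0} \<in> null_sets lborel"
        by (simp add: null_sets_completion_iff)
      then show ?thesis using eq by (simp add: null_sets_def)
    qed simp
  qed
  also have "\<dots> = \<infinity> * emeasure KK Dg" using Dg by (rule nn_integral_cmult_indicator)
  also have "\<dots> = 0" using KDg by simp
  finally have E0: "emeasure (lborel \<Otimes>\<^sub>M KK) E = 0" by simp
  have "emeasure (lborel \<Otimes>\<^sub>M KK) E = (\<integral>\<^sup>+w. emeasure KK (Pair w -` E) \<partial>lborel)"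
    using E by (rule KK.emeasure_pair_measure_alt)
  then have "(\<integral>\<^sup>+w. emeasure KK (Pair w -` E) \<partial>lborel) = 0" using E0 by simp
  then have "AE w in lborel. emeasure KK (Pair w -` E) = 0"
    using KK.measurable_emeasure_Pair[OF E] by (simp add: nn_integral_0_iff_AE)
  moreover have "\<And>w. Pair w -` E = {p. w \<bullet> fst p = w \<bullet> snd p}" by (auto simp: E_def)
  ultimately show ?thesis by (simp add: KK_def)
qed


lemma fst_meas_leb: "fst \<in> measurable (lebesgue :: ((real^'n)\<times>real) measure) (lebesgue :: (real^'n) measure)"
proof (rule measurableI)
  fix S :: "(real^'n) set" assume "S \<in> sets lebesgue"
  then obtain S1 T T' where ST: "S = S1 \<union> T" "T \<subseteq> T'" "T' \<in> null_sets lborel" "S1 \<in> sets lborel"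
    by (rule sets_completionE)
  have "T' \<times> (UNIV::real set) \<in> null_sets (lborel \<Otimes>\<^sub>M lborel)"
    using ST(3) by (intro lborel.times_in_null_sets1) auto
  then have n: "T' \<times> (UNIV::real set) \<in> null_sets lborel" by (simp add: lborel_prod)
  have "S1 \<times> (UNIV::real set) \<in> sets (lborel \<Otimes>\<^sub>M lborel)" using ST(4) by (intro pair_measureI) auto
  then have s: "S1 \<times> (UNIV::real set) \<in> sets lborel" by (metis lborel_prod)
  have "fst -` S \<inter> space lebesgue = S1 \<times> UNIV \<union> T \<times> (UNIV::real set)" using ST(1) by auto
  moreover have "T \<times> (UNIV::real set) \<subseteq> T' \<times> UNIV" using ST(2) by auto
  ultimately show "fst -` S \<inter> space lebesgue \<in> sets (lebesgue :: ((real^'n)\<times>real) measure)"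
    using n s by (metis sets_completionI)
qed auto



theorem mainTheorem12:
  fixes U Bmin :: real
    and A :: "(real^'n) set"
    and F :: "(real^'n) measure" and f :: "real^'n \<Rightarrow> ennreal"
    and G :: "((real^'n) \<times> real) measure" and g :: "(real^'n) \<times> real \<Rightarrow> ennreal"
    and r :: "real^'n \<Rightarrow> real"
  assumes d2: "CARD('n) \<ge> 2"
    and U: "U > 0" and Bmin: "Bmin > 0"
    and A_pos: "A \<subseteq> {x. \<forall>i. 0 < x $ i}"
    and A_meas: "A \<in> sets lebesgue"
    and f_meas: "f \<in> borel_measurable lebesgue"
    and F_def: "F = density lebesgue f"
    and F_prob: "prob_space F"
    and F_on_A: "emeasure F A = 1"
    and g_meas: "g \<in> borel_measurable lebesgue"
    and G_def: "G = density lebesgue g"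
    and G_prob: "prob_space G"
    and G_on_Theta: "emeasure G (Theta U Bmin) = 1"
    and r_meas: "r \<in> borel_measurable lebesgue"
    and r_pos: "\<forall>\<alpha>\<in>A. 0 < r \<alpha>"
  shows "(AE w in distr G lebesgue fst. continuous_on UNIV (cdf (Kw F r w)))
         \<and> emeasure G {p \<in> Theta U Bmin. continuous_on UNIV (cdf (Kw F r (fst p)))} = 1"
proof -
  note KP = Kdist_props[OF d2 A_meas f_meas F_def F_prob F_on_A r_meas r_pos]
  define Kd where "Kd = Kdist F r"
  have Kp: "prob_space Kd" "sets Kd = sets borel" "\<And>g0. emeasure Kd {g0} = 0"
    using KP unfolding Kd_def by auto
  have "AE w in lborel. emeasure (Kd \<Otimes>\<^sub>M Kd) {p. w \<bullet> fst p = w \<bullet> snd p} = 0"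
    using AE_hyper[OF Kp] .
  note ae = this
  obtain N where N0: "{w \<in> space lborel. \<not> emeasure (Kd \<Otimes>\<^sub>M Kd) {p. w \<bullet> fst p = w \<bullet> snd p} = 0} \<subseteq> N"
    "emeasure lborel N = 0" "N \<in> sets lborel"
    using ae by (rule AE_E)
  have N: "{w \<in> space lborel. \<not> emeasure (Kd \<Otimes>\<^sub>M Kd) {p. w \<bullet> fst p = w \<bullet> snd p} = 0} \<subseteq> N"
    "N \<in> null_sets lborel" using N0 by (auto simp: null_sets_def)
  have good: "continuous_on UNIV (cdf (Kw F r w))" if "w \<notin> N" for w
  proof -
    have z: "emeasure (Kd \<Otimes>\<^sub>M Kd) {p. w \<bullet> fst p = w \<bullet> snd p} = 0" using N(1) that by auto
    have "Kw F r w = distr Kd borel (\<lambda>\<gamma>. w \<bullet> \<gamma>)" by (simp add: Kw_def Kd_def)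
    moreover have "prob_space (distr Kd borel (\<lambda>\<gamma>. w \<bullet> \<gamma>))"
      using Kp by (intro prob_space.prob_space_distr) (auto simp: measurable_cong_sets[OF Kp(2) refl])
    ultimately show ?thesis
      using no_atoms_of_pair[OF Kp(1,2) z] by (intro cdf_cont_of_no_atoms) auto
  qed
  have "N \<times> (UNIV::real set) \<in> null_sets (lborel \<Otimes>\<^sub>M lborel)"
    using N(2) by (intro lborel.times_in_null_sets1) auto
  then have "N \<times> (UNIV::real set) \<in> null_sets lborel" by (simp add: lborel_prod)
  then have NL: "N \<times> (UNIV::real set) \<in> null_sets lebesgue" by (rule null_sets_completionI)
  have NG: "N \<times> (UNIV::real set) \<in> null_sets G" unfolding G_def
    using NL g_meas by (subst null_sets_density_iff) (auto intro: AE_I')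
  have sG: "sets G = sets lebesgue" "space G = UNIV" using G_def by auto
  have fm: "fst \<in> measurable G lebesgue"
    using fst_meas_leb by (simp add: measurable_cong_sets[OF sG(1) refl])
  have NLw: "N \<in> sets lebesgue" using N(2) by (auto intro: null_sets_completionI)
  have "N \<in> null_sets (distr G lebesgue fst)"
  proof -
    have "fst -` N \<inter> space G = N \<times> UNIV" using sG by auto
    then show ?thesis using NLw NG fm by (simp add: null_sets_def emeasure_distr)
  qed
  then have c1: "AE w in distr G lebesgue fst. continuous_on UNIV (cdf (Kw F r w))"
    by (rule AE_I') (auto intro: good)
  define S2 where "S2 = {p \<in> Theta U Bmin. continuous_on UNIV (cdf (Kw F r (fst p)))}"
  have Th: "Theta U Bmin \<in> sets G" using G_on_Theta emeasure_notin_sets by fastforce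
  have sub2: "Theta U Bmin - N \<times> UNIV \<subseteq> S2"
  proof
    fix p assume p: "p \<in> Theta U Bmin - N \<times> UNIV"
    then have "fst p \<notin> N" by (cases p) auto
    then show "p \<in> S2" using p good[of "fst p"] by (simp add: S2_def)
  qed
  have S2eq: "S2 = (Theta U Bmin - N \<times> UNIV) \<union> (S2 \<inter> N \<times> UNIV)"
  proof (rule set_eqI)
    fix p :: "(real^'n)\<times>real"
    show "p \<in> S2 \<longleftrightarrow> p \<in> (Theta U Bmin - N \<times> UNIV) \<union> (S2 \<inter> N \<times> UNIV)"
      using good[of "fst p"] by (cases p) (auto simp: S2_def)
  qed
  have "S2 \<inter> N \<times> UNIV \<in> null_sets lebesgue"
    by (rule null_sets_completion_subset[OF _ NL]) auto
  then have Y: "S2 \<inter> N \<times> UNIV \<in> sets G" using sG(1) by (simp add: null_setsD2)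
  have X: "Theta U Bmin - N \<times> UNIV \<in> sets G" using Th null_setsD2[OF NG] by (rule sets.Diff)
  have S2m: "S2 \<in> sets G" by (subst S2eq) (rule sets.Un[OF X Y])
  have "1 = emeasure G (Theta U Bmin - N \<times> UNIV)" using G_on_Theta emeasure_Diff_null_set[OF NG Th] by simp
  also have "\<dots> \<le> emeasure G S2" using S2m sub2 by (rule emeasure_mono[rotated])
  finally have "1 \<le> emeasure G S2" .
  moreover have "emeasure G S2 \<le> 1" using G_prob prob_space.emeasure_le_1 by blast
  ultimately have "emeasure G S2 = 1" by (rule antisym[rotated])
  then show ?thesis using c1 by (simp add: S2_def)
qed

end
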